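(* For each $t\in\{0,1,\dots,T-1\}$, $k\in\mathbb{N}_0$ and $i\in\{1,\dots,N\}$, there exists an integer control limit $\delta_i^{(k,t)}$ with $0<\delta_i^{(k,t)}\le\xi_i$ such that, for every $x\in\mathbb{N}_0$, the action $a=1$ (replacement) is optimal in state $(x,k)$ at epoch $t$ if and only if $x\ge\delta_i^{(k,t)}$.
   Context: Fix integers $N\ge1$, $T\ge1$, reals $\alpha_0,\beta_0>0$, and for each $i\in\{1,\dots,N\}$ an integer failure threshold $\xi_i\ge1$ and costs $0<c_p^i<c_u^i$. $\mathbb{N}_0=\{0,1,2,\dots\}$. For real $r>0$ and $p\in(0,1)$, $NB(r,p)$ is the distribution on $\mathbb{N}_0$ with $P(n)=\frac{\Gamma(n+r)}{\Gamma(r)n!}p^r(1-p)^n$; $NB(0,p)$ is the point mass at $0$. For $t\in\{0,\dots,T\}$ let $p_t=\frac{\beta_0+Nt}{\beta_0+Nt+1}$. Let $\mathbb{I}_i(x)=1$ if $x\ge\xi_i$, else $0$; $\mathcal{A}_i(x)=\{0,1\}$ if $x<\xi_i$ and $\{1\}$ if $x\ge\xi_i$ ($a=1$: replacement, $a=0$: no action); $C_i(x,a)=a(1-\mathbb{I}_i(x))c_p^i+\mathbb{I}_i(x)c_u^i$. Define $\tilde V^{N,i}_T(x,k)=\mathbb{I}_i(x)c_u^i$ and for $t=T-1,\dots,0$: $\tilde V^{N,i}_t(x,k)=\min_{a\in\mathcal{A}_i(x)}\{C_i(x,a)+\mathbb{E}[\tilde V^{N,i}_{t+1}(x(1-a)+Z,\;k+Z+K)]\}$,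 where $Z\sim NB(\alpha_0+k,p_t)$ and $K\sim NB((N-1)(\alpha_0+k),p_t)$ are independent. An action $a\in\mathcal{A}_i(x)$ is optimal in state $(x,k)$ at epoch $t$ if it attains this minimum. *)

theory Defs
  imports "HOL-Analysis.Analysis"
begin

definition nb_pmf :: "real \<Rightarrow> real \<Rightarrow> nat \<Rightarrow> real" where
  "nb_pmf r p n =
     (if r = 0 then (if n = 0 then 1 else 0)
      else Gamma (real n + r) / (Gamma r * fact n) * p powr r * (1 - p) ^ n)"

definition p_t :: "nat \<Rightarrow> real \<Rightarrow> nat \<Rightarrow> real" where
  "p_t N b0 t = (b0 + real N * real t) / (b0 + real N * real t + 1)"

definition nb_expect :: "real \<Rightarrow> real \<Rightarrow> real \<Rightarrow> (nat \<Rightarrow> nat \<Rightarrow> real) \<Rightarrow> real" where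
  "nb_expect r1 r2 p f = (\<Sum>z. \<Sum>j. nb_pmf r1 p z * nb_pmf r2 p j * f z j)"

definition fail_ind :: "nat \<Rightarrow> nat \<Rightarrow> real" where
  "fail_ind xi x = (if x \<ge> xi then 1 else 0)"

definition actions :: "nat \<Rightarrow> nat \<Rightarrow> nat set" where
  "actions xi x = (if x < xi then {0, 1} else {1})"

definition cost :: "nat \<Rightarrow> real \<Rightarrow> real \<Rightarrow> nat \<Rightarrow> nat \<Rightarrow> real" where
  "cost xi cp cu x a = real a * (1 - fail_ind xi x) * cp + fail_ind xi x * cu"

definition qval :: "nat \<Rightarrow> real \<Rightarrow> real \<Rightarrow> nat \<Rightarrow> real \<Rightarrow> real
     \<Rightarrow> nat \<Rightarrow> (nat \<Rightarrow> nat \<Rightarrow> real) \<Rightarrow> nat \<Rightarrow> nat \<Rightarrow> nat \<Rightarrow> real" where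
  "qval N a0 b0 xi cp cu t V x k a =
     cost xi cp cu x a
     + nb_expect (a0 + real k) ((real N - 1) * (a0 + real k)) (p_t N b0 t)
         (\<lambda>z j. V (x * (1 - a) + z) (k + z + j))"

text \<open>Value function indexed by the number n of remaining epochs (epoch t = T - n).\<close>
primrec Vrem :: "nat \<Rightarrow> nat \<Rightarrow> real \<Rightarrow> real \<Rightarrow> nat \<Rightarrow> real \<Rightarrow> real
     \<Rightarrow> nat \<Rightarrow> nat \<Rightarrow> nat \<Rightarrow> real" where
  "Vrem N T a0 b0 xi cp cu 0 = (\<lambda>x k. fail_ind xi x * cu)"
| "Vrem N T a0 b0 xi cp cu (Suc n) =
     (\<lambda>x k. Min ((\<lambda>a. qval N a0 b0 xi cp cu (T - Suc n) (Vrem N T a0 b0 xi cp cu n) x k a)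
                    ` actions xi x))"

definition Vt :: "nat \<Rightarrow> nat \<Rightarrow> real \<Rightarrow> real \<Rightarrow> nat \<Rightarrow> real \<Rightarrow> real
     \<Rightarrow> nat \<Rightarrow> nat \<Rightarrow> nat \<Rightarrow> real" where
  "Vt N T a0 b0 xi cp cu t = Vrem N T a0 b0 xi cp cu (T - t)"

definition optimal :: "nat \<Rightarrow> nat \<Rightarrow> real \<Rightarrow> real \<Rightarrow> nat \<Rightarrow> real \<Rightarrow> real
     \<Rightarrow> nat \<Rightarrow> nat \<Rightarrow> nat \<Rightarrow> nat \<Rightarrow> bool" where
  "optimal N T a0 b0 xi cp cu t x k a \<longleftrightarrow>
     a \<in> actions xi x \<and>
     (\<forall>b\<in>actions xi x.
        qval N a0 b0 xi cp cu t (Vt N T a0 b0 xi cp cu (Suc t)) x k a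
        \<le> qval N a0 b0 xi cp cu t (Vt N T a0 b0 xi cp cu (Suc t)) x k b)"

end

theory Submission
  imports Defs
begin

lemma nb_pmf_nonneg: assumes "r \<ge> 0" "0 < p" "p < 1" shows "nb_pmf r p n \<ge> 0"
proof (cases "r = 0")
  case True then show ?thesis by (simp add: nb_pmf_def)
next
  case False
  then have "r > 0" using assms by simp
  have "Gamma (real n + r) > 0" using \<open>r>0\<close> by (intro Gamma_real_pos) simp
  moreover have "Gamma r > 0" using \<open>r>0\<close> by (intro Gamma_real_pos)
  ultimately show ?thesis using False assms by (simp add: nb_pmf_def)
qed

lemma nb_pmf_sums: assumes "r \<ge> 0" "0 < p" "p < 1" shows "(\<lambda>n. nb_pmf r p n) sums 1"
proof (cases "r = 0")
  case True
  have "(\<lambda>n. nb_pmf r p n) = (\<lambda>n. if n = 0 then 1 else 0)" using True by (auto simp: nb_pmf_def)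
  then show ?thesis using sums_single[of 0 "\<lambda>_. 1::real"] by (simp add: if_distrib)
next
  case False
  then have r: "r > 0" using assms by simp
  have "\<bar>-(1-p)\<bar> < 1" using assms by simp
  from gen_binomial_real[OF this, of "-r"]
  have s: "(\<lambda>n. ((-r) gchoose n) * (-(1-p))^n) sums p powr (-r)" by simp
  have eq: "((-r) gchoose n) * (-(1-p))^n = pochhammer r n / fact n * (1-p)^n" for n
  proof -
    have A: "((-r) gchoose n) = (-1)^n * pochhammer r n / fact n" by (simp add: gbinomial_pochhammer)
    have B: "(-(1-p))^n = (-1)^n * (1-p)^n" by (rule power_minus)
    have C: "((-1::real)^n) * (-1)^n = 1" by (simp flip: power_mult_distrib)
    have "((-r) gchoose n) * (-(1-p))^n = ((-1)^n * (-1)^n) * (pochhammer r n / fact n * (1-p)^n)"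
      unfolding A B by (simp add: divide_inverse ac_simps)
    then show ?thesis unfolding C by simp
  qed
  have rr: "r \<notin> \<int>\<^sub>\<le>\<^sub>0" using r by (auto elim!: nonpos_Ints_cases)
  have eq2: "nb_pmf r p n = p powr r * (pochhammer r n / fact n * (1-p)^n)" for n
    using False by (simp add: nb_pmf_def pochhammer_Gamma[OF rr] add.commute)
  from sums_mult[OF s[unfolded eq], of "p powr r"]
  show ?thesis unfolding eq2 using assms by (simp add: powr_minus)
qed

lemma dbl_props:
  fixes w1 w2 :: "nat \<Rightarrow> real" and f :: "nat \<Rightarrow> nat \<Rightarrow> real"
  assumes s1: "w1 sums 1" and s2: "w2 sums 1" and n1: "\<And>n. w1 n \<ge> 0" and n2: "\<And>n. w2 n \<ge> 0"
    and fb: "\<And>z j. 0 \<le> f z j \<and> f z j \<le> B"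
  shows "(\<forall>z. summable (\<lambda>j. w1 z * w2 j * f z j)) \<and> summable (\<lambda>z. \<Sum>j. w1 z * w2 j * f z j)
     \<and> 0 \<le> (\<Sum>z. \<Sum>j. w1 z * w2 j * f z j) \<and> (\<Sum>z. \<Sum>j. w1 z * w2 j * f z j) \<le> B"
proof -
  have B0: "B \<ge> 0" using fb[of 0 0] by linarith
  have sw2: "summable w2" using s2 by (rule sums_summable)
  have sw1: "summable w1" using s1 by (rule sums_summable)
  have inner_s: "summable (\<lambda>j. w1 z * w2 j * f z j)" for z
  proof (rule summable_comparison_test'[where g="\<lambda>j. w1 z * B * w2 j" and N=0])
    show "summable (\<lambda>j. w1 z * B * w2 j)" using sw2 by (rule summable_mult)
    fix j
    have "0 \<le> w1 z * w2 j * f z j" using n1 n2 fb by simp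
    moreover have "w1 z * w2 j * f z j \<le> w1 z * w2 j * B"
      using n1 n2 fb by (simp add: mult_left_mono)
    ultimately show "norm (w1 z * w2 j * f z j) \<le> w1 z * B * w2 j" by (simp add: ac_simps)
  qed
  have inner_sum: "(\<lambda>j. w1 z * B * w2 j) sums (w1 z * B)" for z
    using sums_mult[OF s2, of "w1 z * B"] by simp
  have inner_le: "(\<Sum>j. w1 z * w2 j * f z j) \<le> w1 z * B" for z
  proof -
    have pw: "w1 z * w2 j * f z j \<le> w1 z * B * w2 j" for j
    proof -
      have "w1 z * w2 j * f z j \<le> w1 z * w2 j * B"
        using fb[of z j] n1[of z] n2[of j] by (intro mult_left_mono) auto
      then show ?thesis by (simp add: ac_simps)
    qed
    have "(\<Sum>j. w1 z * w2 j * f z j) \<le> (\<Sum>j. w1 z * B * w2 j)"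
      using inner_s sums_summable[OF inner_sum] pw by (intro suminf_le) auto
    then show ?thesis using sums_unique[OF inner_sum] by simp
  qed
  have inner_ge: "0 \<le> (\<Sum>j. w1 z * w2 j * f z j)" for z
    using inner_s n1 n2 fb by (intro suminf_nonneg) auto
  have outer_s: "summable (\<lambda>z. \<Sum>j. w1 z * w2 j * f z j)"
  proof (rule summable_comparison_test'[where g="\<lambda>z. w1 z * B" and N=0])
    show "summable (\<lambda>z. w1 z * B)" using sw1 by (rule summable_mult2)
    fix z show "norm (\<Sum>j. w1 z * w2 j * f z j) \<le> w1 z * B" using inner_le inner_ge by simp
  qed
  have "(\<Sum>z. \<Sum>j. w1 z * w2 j * f z j) \<le> (\<Sum>z. w1 z * B)"
    using outer_s summable_mult2[OF sw1] inner_le by (intro suminf_le) auto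
  also have "\<dots> = B" using sums_unique[OF sums_mult2[OF s1, of B]] by simp
  finally show ?thesis using inner_s outer_s inner_ge by (auto intro: suminf_nonneg)
qed

lemma dbl_mono:
  fixes w1 w2 :: "nat \<Rightarrow> real" and f g :: "nat \<Rightarrow> nat \<Rightarrow> real"
  assumes s1: "w1 sums 1" and s2: "w2 sums 1" and n1: "\<And>n. w1 n \<ge> 0" and n2: "\<And>n. w2 n \<ge> 0"
    and fb: "\<And>z j. 0 \<le> f z j \<and> f z j \<le> g z j \<and> g z j \<le> B"
  shows "(\<Sum>z. \<Sum>j. w1 z * w2 j * f z j) \<le> (\<Sum>z. \<Sum>j. w1 z * w2 j * g z j)"
proof -
  have F: "(\<forall>z. summable (\<lambda>j. w1 z * w2 j * f z j)) \<and> summable (\<lambda>z. \<Sum>j. w1 z * w2 j * f z j)"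
    using dbl_props[OF s1 s2 n1 n2, of f B] fb by (meson order_trans)
  have G: "(\<forall>z. summable (\<lambda>j. w1 z * w2 j * g z j)) \<and> summable (\<lambda>z. \<Sum>j. w1 z * w2 j * g z j)"
    using dbl_props[OF s1 s2 n1 n2, of g B] fb by (meson order_trans)
  have pw: "w1 z * w2 j * f z j \<le> w1 z * w2 j * g z j" for z j
    using fb[of z j] n1[of z] n2[of j] by (intro mult_left_mono) auto
  have le: "(\<Sum>j. w1 z * w2 j * f z j) \<le> (\<Sum>j. w1 z * w2 j * g z j)" for z
    using F G pw by (intro suminf_le) auto
  show ?thesis apply (rule suminf_le) using le F G by auto
qed

lemma p_t_bounds: assumes "b0 > 0" shows "0 < p_t N b0 t" "p_t N b0 t < 1"
proof -
  have d: "b0 + real N * real t > 0" using assms by (simp add: add_pos_nonneg)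
  then show "0 < p_t N b0 t" unfolding p_t_def by simp
  show "p_t N b0 t < 1" unfolding p_t_def using d by simp
qed

context
  fixes N T :: nat and a0 b0 :: real and xi :: nat and cp cu :: real
  assumes N: "N \<ge> 1" and a0: "a0 > 0" and b0: "b0 > 0" and cp: "0 < cp" and cpu: "cp < cu"
begin

lemma E_props:
  assumes "\<And>z j. 0 \<le> h z j \<and> h z j \<le> B"
  shows "0 \<le> nb_expect (a0 + real k) ((real N - 1) * (a0 + real k)) (p_t N b0 t) h
       \<and> nb_expect (a0 + real k) ((real N - 1) * (a0 + real k)) (p_t N b0 t) h \<le> B"
proof -
  have r1: "a0 + real k \<ge> 0" using a0 by simp
  have r2: "(real N - 1) * (a0 + real k) \<ge> 0" using a0 N by simp
  note p = p_t_bounds[OF b0, of N t]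
  show ?thesis unfolding nb_expect_def
    using dbl_props[OF nb_pmf_sums[OF r1 p] nb_pmf_sums[OF r2 p] nb_pmf_nonneg[OF r1 p] nb_pmf_nonneg[OF r2 p], of h B]
      assms by blast
qed

lemma E_mono:
  assumes "\<And>z j. 0 \<le> h z j \<and> h z j \<le> g z j \<and> g z j \<le> B"
  shows "nb_expect (a0 + real k) ((real N - 1) * (a0 + real k)) (p_t N b0 t) h
       \<le> nb_expect (a0 + real k) ((real N - 1) * (a0 + real k)) (p_t N b0 t) g"
proof -
  have r1: "a0 + real k \<ge> 0" using a0 by simp
  have r2: "(real N - 1) * (a0 + real k) \<ge> 0" using a0 N by simp
  note p = p_t_bounds[OF b0, of N t]
  show ?thesis unfolding nb_expect_def
    by (rule dbl_mono[OF nb_pmf_sums[OF r1 p] nb_pmf_sums[OF r2 p] nb_pmf_nonneg[OF r1 p] nb_pmf_nonneg[OF r2 p], of h g B])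
      (rule assms)
qed

lemma q0: "qval N a0 b0 xi cp cu t W x k 0 = fail_ind xi x * cu
   + nb_expect (a0 + real k) ((real N - 1) * (a0 + real k)) (p_t N b0 t) (\<lambda>z j. W (x + z) (k + z + j))"
  by (simp add: qval_def cost_def)

lemma q1: "qval N a0 b0 xi cp cu t W x k 1 = (1 - fail_ind xi x) * cp + fail_ind xi x * cu
   + nb_expect (a0 + real k) ((real N - 1) * (a0 + real k)) (p_t N b0 t) (\<lambda>z j. W z (k + z + j))"
  by (simp add: qval_def cost_def)


lemma q1s: "qval N a0 b0 xi cp cu t W x k (Suc 0) = (1 - fail_ind xi x) * cp + fail_ind xi x * cu
   + nb_expect (a0 + real k) ((real N - 1) * (a0 + real k)) (p_t N b0 t) (\<lambda>z j. W z (k + z + j))"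
  by (simp add: qval_def cost_def)

lemma V_props:
  "(\<forall>x k. 0 \<le> Vrem N T a0 b0 xi cp cu n x k \<and> Vrem N T a0 b0 xi cp cu n x k \<le> real (Suc n) * (cp + cu))
   \<and> (\<forall>x y k. x \<le> y \<longrightarrow> Vrem N T a0 b0 xi cp cu n x k \<le> Vrem N T a0 b0 xi cp cu n y k)"
proof (induction n)
  case 0
  show ?case using cp cpu by (auto simp: fail_ind_def)
next
  case (Suc n)
  define W where "W = Vrem N T a0 b0 xi cp cu n"
  define B where "B = real (Suc n) * (cp + cu)"
  define tt where "tt = T - Suc n"
  have Wb: "0 \<le> W x k \<and> W x k \<le> B" for x k using Suc.IH unfolding W_def B_def by blast
  have Wm: "x \<le> y \<Longrightarrow> W x k \<le> W y k" for x y k using Suc.IH unfolding W_def by blast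
  define e where "e x k = nb_expect (a0 + real k) ((real N - 1) * (a0 + real k)) (p_t N b0 tt) (\<lambda>z j. W (x + z) (k + z + j))" for x k
  define c where "c k = nb_expect (a0 + real k) ((real N - 1) * (a0 + real k)) (p_t N b0 tt) (\<lambda>z j. W z (k + z + j))" for k
  have eb: "0 \<le> e x k \<and> e x k \<le> B" for x k unfolding e_def by (rule E_props) (rule Wb)
  have cb: "0 \<le> c k \<and> c k \<le> B" for k unfolding c_def by (rule E_props) (rule Wb)
  have em: "x \<le> y \<Longrightarrow> e x k \<le> e y k" for x y k
  proof -
    assume xy: "x \<le> y"
    have "0 \<le> W (x + z) (k + z + j) \<and> W (x + z) (k + z + j) \<le> W (y + z) (k + z + j) \<and> W (y + z) (k + z + j) \<le> B" for z j
      using Wb[of "x+z" "k+z+j"] Wb[of "y+z" "k+z+j"] Wm[of "x+z" "y+z" "k+z+j"] xy by simp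
    then show ?thesis unfolding e_def by (rule E_mono[where B=B])
  qed
  have Vs: "Vrem N T a0 b0 xi cp cu (Suc n) x k = (if x < xi then min (e x k) (cp + c k) else cu + c k)" for x k
  proof (cases "x < xi")
    case True
    then show ?thesis
      by (simp add: actions_def q0 q1 q1s fail_ind_def e_def c_def W_def tt_def)
  next
    case False
    then show ?thesis
      by (simp add: actions_def q1 q1s fail_ind_def c_def W_def tt_def)
  qed
  have B0: "B \<ge> 0" using cp cpu unfolding B_def by simp
  show ?case
  proof (intro conjI allI impI)
    fix x k
    show "0 \<le> Vrem N T a0 b0 xi cp cu (Suc n) x k" unfolding Vs using eb cb cp cpu by simp
    have "cp + c k \<le> real (Suc (Suc n)) * (cp + cu)" "cu + c k \<le> real (Suc (Suc n)) * (cp + cu)"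
      using cb[of k] cp cpu unfolding B_def by (simp_all add: algebra_simps)
    then show "Vrem N T a0 b0 xi cp cu (Suc n) x k \<le> real (Suc (Suc n)) * (cp + cu)"
      unfolding Vs by auto
  next
    fix x y k :: nat assume xy: "x \<le> y"
    show "Vrem N T a0 b0 xi cp cu (Suc n) x k \<le> Vrem N T a0 b0 xi cp cu (Suc n) y k"
      unfolding Vs using em[OF xy, of k] cp cpu xy by auto
  qed
qed

lemma opt_iff:
  assumes "t < T"
  shows "optimal N T a0 b0 xi cp cu t x k 1 \<longleftrightarrow> (xi \<le> x \<or>
     cp + nb_expect (a0 + real k) ((real N - 1) * (a0 + real k)) (p_t N b0 t) (\<lambda>z j. Vrem N T a0 b0 xi cp cu (T - Suc t) z (k + z + j))
     \<le> nb_expect (a0 + real k) ((real N - 1) * (a0 + real k)) (p_t N b0 t) (\<lambda>z j. Vrem N T a0 b0 xi cp cu (T - Suc t) (x + z) (k + z + j)))"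
  by (cases "x < xi") (auto simp: optimal_def Vt_def actions_def q0 q1 q1s fail_ind_def)

end

theorem proposition2:
  fixes N T :: nat and a0 b0 :: real and xi :: "nat \<Rightarrow> nat" and cp cu :: "nat \<Rightarrow> real"
  assumes "N \<ge> 1" and "T \<ge> 1" and "a0 > 0" and "b0 > 0"
    and "\<forall>i\<in>{1..N}. xi i \<ge> 1"
    and "\<forall>i\<in>{1..N}. 0 < cp i \<and> cp i < cu i"
    and "t < T" and "i \<in> {1..N}"
  shows "\<exists>\<delta>::nat. 0 < \<delta> \<and> \<delta> \<le> xi i \<and>
           (\<forall>x::nat. optimal N T a0 b0 (xi i) (cp i) (cu i) t x k 1 \<longleftrightarrow> x \<ge> \<delta>)"
proof -
  have xi1: "xi i \<ge> 1" and cpi: "0 < cp i" and cpu: "cp i < cu i" using assms(5,6,8) by auto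
  define P where "P x = optimal N T a0 b0 (xi i) (cp i) (cu i) t x k 1" for x
  define W where "W = Vrem N T a0 b0 (xi i) (cp i) (cu i) (T - Suc t)"
  define e where "e x = nb_expect (a0 + real k) ((real N - 1) * (a0 + real k)) (p_t N b0 t) (\<lambda>z j. W (x + z) (k + z + j))" for x
  note VP = V_props[OF assms(1,3,4) cpi cpu, of T "xi i" "T - Suc t"]
  have Pi: "P x \<longleftrightarrow> (xi i \<le> x \<or> cp i + e 0 \<le> e x)" for x
    unfolding P_def e_def W_def using opt_iff[OF assms(1,3,4) cpi cpu assms(7)] by simp
  have em: "x \<le> y \<Longrightarrow> e x \<le> e y" for x y
  proof -
    assume xy: "x \<le> y"
    have Wb: "0 \<le> W a b \<and> W a b \<le> real (Suc (T - Suc t)) * (cp i + cu i)" for a b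
      using VP unfolding W_def by blast
    have Wm: "a \<le> a' \<Longrightarrow> W a b \<le> W a' b" for a a' b
      using VP unfolding W_def by blast
    have "0 \<le> W (x + z) (k + z + j) \<and> W (x + z) (k + z + j) \<le> W (y + z) (k + z + j) \<and> W (y + z) (k + z + j) \<le> real (Suc (T - Suc t)) * (cp i + cu i)" for z j
      using Wb[of "x+z" "k+z+j"] Wb[of "y+z" "k+z+j"] Wm[of "x+z" "y+z" "k+z+j"] xy by simp
    then show ?thesis unfolding e_def by (rule E_mono[OF assms(1,3,4) cpi cpu])
  qed
  have Pm: "P x \<Longrightarrow> x \<le> y \<Longrightarrow> P y" for x y
    unfolding Pi using em[of x y] by auto
  have Pxi: "P (xi i)" unfolding Pi by simp
  have nP0: "\<not> P 0" unfolding Pi using xi1 cpi by simp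
  define d where "d = (LEAST x. P x)"
  have "P d" unfolding d_def using Pxi by (rule LeastI)
  have dle: "d \<le> xi i" unfolding d_def using Pxi by (rule Least_le)
  have "d > 0" using \<open>P d\<close> nP0 by (cases d) auto
  moreover have "P x \<longleftrightarrow> x \<ge> d" for x
  proof
    assume "P x" then show "d \<le> x" unfolding d_def by (rule Least_le)
  next
    assume "d \<le> x" then show "P x" using Pm[OF \<open>P d\<close>] by blast
  qed
  ultimately show ?thesis using dle unfolding P_def by blast
qed

end
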